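(* For every integer $\ell\ge3$ there exists an admissible partition of $\ell$. Moreover, if $\ell\ge500$, there exists an admissible partition $\mathfrak{a}$ of $\ell$ such that $c^{\mathfrak{a}}((a,b)^6)\ge\ell/200$ for all $(a,b)\in\{3,4,5\}\times\{3,4,5\}$.
   Context: A cyclic partition of $\ell\in\mathbb{N}$ is a tuple $(a_1,\dots,a_t)$ of positive integers with $\sum_i a_i=\ell$, considered up to cyclic rotation, with indices modulo $t$. For a cyclic partition $\mathfrak{a}=(a_1,\dots,a_t)$ and a finite sequence $a'=(a'_1,\dots,a'_{t'})$, let $c^{\mathfrak{a}}(a')=|\{i\in[t]: a_{(i+j)\bmod t}=a'_j\text{ for all }j\in[t']\}|$ (where $x \bmod t$ denotes the element of $[t]$ congruent to $x$); e.g. for $\mathfrak{a}=(a)$, $c^{\mathfrak{a}}(a,a)=1$. Write $c^{\mathfrak{a}}(a,b)$ for $c^{\mathfrak{a}}((a,b))$. A cyclic partition $\mathfrak{a}$ is admissible if all its parts lie in $\{3,4,5\}$ and $c^{\mathfrak{a}}(a,b)=c^{\mathfrak{a}}(b,a)$ for all $a,b\in\{3,4,5\}$. For a sequence $s$, $s^m$ denotes the concatenation of $m$ copies of $s$; so $(a,b)^6$ is a sequence of length $12$. *)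

theory Defs
  imports Complex_Main
begin

text \<open>A cyclic partition (a_1,...,a_t) is represented by a list of its parts
  (a representative of the rotation class); all notions below are rotation invariant.
  Indices are 0-based: position i of the paper corresponds to list index i-1.\<close>

definition cyclic_partition :: "nat list \<Rightarrow> nat \<Rightarrow> bool" where
  "cyclic_partition xs l \<longleftrightarrow> xs \<noteq> [] \<and> (\<forall>x\<in>set xs. 0 < x) \<and> sum_list xs = l"

definition cnt :: "nat list \<Rightarrow> nat list \<Rightarrow> nat" where
  "cnt xs ys = card {i. i < length xs \<and>
      (\<forall>j < length ys. xs ! ((i + j) mod length xs) = ys ! j)}"

definition admissible :: "nat list \<Rightarrow> bool" where
  "admissible xs \<longleftrightarrow> (\<forall>x\<in>set xs. x \<in> {3,4,5}) \<and>
     (\<forall>a\<in>{3,4,5}. \<forall>b\<in>{3,4,5}. cnt xs [a, b] = cnt xs [b, a])"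

definition seq_pow :: "nat list \<Rightarrow> nat \<Rightarrow> nat list" where
  "seq_pow s m = concat (replicate m s)"

end

theory Submission imports Defs "HOL-Library.Multiset" begin

lemma seq_pow_Suc: "seq_pow u (Suc k) = u @ seq_pow u k"
  by (simp add: seq_pow_def)

lemma seq_pow_0[simp]: "seq_pow u 0 = []"
  by (simp add: seq_pow_def)

lemma length_seq_pow[simp]: "length (seq_pow u k) = k * length u"
  by (induction k) (auto simp: seq_pow_Suc)

lemma seq_pow_nth: "i < k * length u \<Longrightarrow> seq_pow u k ! i = u ! (i mod length u)"
proof (induction k arbitrary: i)
  case 0 then show ?case by simp
next
  case (Suc k)
  show ?case
  proof (cases "i < length u")
    case True then show ?thesis by (simp add: seq_pow_Suc nth_append)
  next
    case False
    then have "i - length u < k * length u" using Suc.prems by auto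
    then show ?thesis using False Suc.IH by (simp add: seq_pow_Suc nth_append le_mod_geq)
  qed
qed

lemma cnt_lb:
  assumes xs: "xs = A @ seq_pow u k @ C" and u: "u \<noteq> []"
    and p: "\<forall>j<length p. p!j = u!((s+j) mod length u)"
    and pne: "p \<noteq> []" and K: "\<forall>q<K. s + length u * q + length p \<le> k * length u"
  shows "K \<le> cnt xs p"
proof -
  define d where "d = length u"
  have d0: "d > 0" using u by (simp add: d_def)
  define f where "f = (\<lambda>q. length A + s + d * q)"
  define S where "S = {i. i < length xs \<and> (\<forall>j<length p. xs ! ((i + j) mod length xs) = p ! j)}"
  have inj: "inj_on f {..<K}" using d0 by (auto simp: inj_on_def f_def)
  have sub: "f ` {..<K} \<subseteq> S"
  proof
    fix i assume "i \<in> f ` {..<K}"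
    then obtain q where q: "q<K" "i = f q" by auto
    have b: "s + d*q + length p \<le> k * d" using K q(1) by (auto simp: d_def)
    have "\<forall>j<length p. xs ! ((i + j) mod length xs) = p ! j"
    proof (intro allI impI)
      fix j assume j: "j < length p"
      have lt: "i + j < length xs" using b j q(2) xs by (auto simp: f_def d_def)
      have lt2: "s + d*q + j < k * length u" using b j by (auto simp: d_def)
      have "xs ! ((i + j) mod length xs) = xs ! (i+j)" using lt by simp
      also have "\<dots> = seq_pow u k ! (s + d*q + j)"
        using lt2 q(2) xs by (simp add: f_def nth_append algebra_simps)
      also have "\<dots> = u ! ((s + d*q + j) mod d)" using lt2 by (simp add: seq_pow_nth d_def)
      also have "(s + d*q + j) mod d = (s + j) mod d"
        by (metis add.commute add.left_commute mod_mult_self2 mult.commute)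
      finally show "xs ! ((i + j) mod length xs) = p ! j" using p j by (simp add: d_def)
    qed
    moreover have "i < length xs"
      using b q(2) xs pne by (cases p) (auto simp: f_def d_def)
    ultimately show "i \<in> S" by (simp add: S_def)
  qed
  have fin: "finite S" by (simp add: S_def)
  have "K = card (f ` {..<K})" using inj by (simp add: card_image)
  also have "\<dots> \<le> card S" using card_mono[OF fin sub] .
  finally show ?thesis by (simp add: cnt_def S_def)
qed

definition lp :: "nat list \<Rightarrow> (nat \<times> nat) multiset" where
  "lp xs = mset (zip xs (tl xs))"

lemma lp_single[simp]: "lp [x] = {#}" by (simp add: lp_def)

lemma lp_Cons: "xs \<noteq> [] \<Longrightarrow> lp (x # xs) = add_mset (x, hd xs) (lp xs)"
  by (cases xs) (auto simp: lp_def)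

lemma lp_append: "xs \<noteq> [] \<Longrightarrow> ys \<noteq> [] \<Longrightarrow> lp (xs @ ys) = lp xs + lp ys + {#(last xs, hd ys)#}"
proof (induction xs)
  case Nil then show ?case by simp
next
  case (Cons x xs)
  show ?case
  proof (cases "xs = []")
    case True then show ?thesis using Cons.prems by (simp add: lp_Cons)
  next
    case False then show ?thesis using Cons by (simp add: lp_Cons)
  qed
qed

lemma cnt_pair:
  assumes "xs \<noteq> []"
  shows "cnt xs [a,b] = count (lp xs) (a,b) + (if last xs = a \<and> hd xs = b then 1 else 0)"
proof -
  define n where "n = length xs"
  have n0: "n > 0" using assms by (simp add: n_def)
  have "{i. i < n \<and> (\<forall>j<length [a,b]. xs ! ((i + j) mod n) = [a,b] ! j)}
      = {i. i < n - 1 \<and> xs ! i = a \<and> xs ! Suc i = b} \<union> (if last xs = a \<and> hd xs = b then {n-1} else {})"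
    (is "?L = ?R")
  proof (intro set_eqI iffI)
    fix i assume "i \<in> ?L"
    then have i: "i < n" "xs ! (i mod n) = a" "xs ! ((i+1) mod n) = b"
      by (auto simp: less_Suc_eq numeral_2_eq_2)
    show "i \<in> ?R"
    proof (cases "i = n - 1")
      case True
      then have "(i+1) mod n = 0" using n0 by simp
      then show ?thesis using True i n0 assms
        by (auto simp: n_def last_conv_nth hd_conv_nth)
    next
      case False
      then show ?thesis using i by auto
    qed
  next
    fix i assume "i \<in> ?R"
    then show "i \<in> ?L" using n0 assms
      by (auto simp: less_Suc_eq numeral_2_eq_2 n_def last_conv_nth hd_conv_nth split: if_splits)
  qed
  then have "cnt xs [a,b] = card ({i. i < n - 1 \<and> xs ! i = a \<and> xs ! Suc i = b} \<union> (if last xs = a \<and> hd xs = b then {n-1} else {}))"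
    by (simp add: cnt_def n_def)
  also have "\<dots> = card {i. i < n - 1 \<and> xs ! i = a \<and> xs ! Suc i = b} + (if last xs = a \<and> hd xs = b then 1 else 0)"
    by (subst card_Un_disjoint) auto
  also have "card {i. i < n - 1 \<and> xs ! i = a \<and> xs ! Suc i = b} = count (lp xs) (a,b)"
  proof -
    have "count (lp xs) (a,b) = length (filter ((=) (a,b)) (zip xs (tl xs)))"
      by (simp add: lp_def count_mset count_list_eq_length_filter)
    also have "\<dots> = card {i. i < length (zip xs (tl xs)) \<and> (a,b) = zip xs (tl xs) ! i}"
      by (rule length_filter_conv_card)
    also have "\<dots> = card {i. i < n - 1 \<and> xs ! i = a \<and> xs ! Suc i = b}"
      by (rule arg_cong[where f=card]) (auto simp: n_def nth_tl)
    finally show ?thesis by simp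
  qed
  finally show ?thesis .
qed


lemma seq_pow_ne[simp]: "seq_pow u k = [] \<longleftrightarrow> k = 0 \<or> u = []"
  by (auto simp: seq_pow_def)

lemma hd_seq_pow[simp]: "k > 0 \<Longrightarrow> u \<noteq> [] \<Longrightarrow> hd (seq_pow u k) = hd u"
  by (cases k) (auto simp: seq_pow_Suc)

lemma last_seq_pow[simp]: "k > 0 \<Longrightarrow> u \<noteq> [] \<Longrightarrow> last (seq_pow u k) = last u"
  by (induction k) (auto simp: seq_pow_Suc last_append)

lemma set_seq_pow: "set (seq_pow u k) \<subseteq> set u"
  by (auto simp: seq_pow_def)

lemma lp_seq_pow1: "lp (seq_pow [a] n) = replicate_mset (n - 1) (a,a)"
proof (induction n)
  case 0 then show ?case by (simp add: lp_def)
next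
  case (Suc n) then show ?case
    by (cases n) (auto simp: seq_pow_Suc lp_Cons)
qed

lemma lp_seq_pow2: "k > 0 \<Longrightarrow> lp (seq_pow [a,b] k) = replicate_mset k (a,b) + replicate_mset (k-1) (b,a)"
proof (induction k)
  case 0 then show ?case by simp
next
  case (Suc k) then show ?case
    by (cases k) (auto simp: seq_pow_Suc lp_Cons)
qed


lemma pat_diag: "\<forall>j<length (seq_pow [a,a] 6). seq_pow [a,a] 6 ! j = [a] ! ((0+j) mod length [a])"
proof (intro allI impI)
  fix j assume "j < length (seq_pow [a,a] 6)"
  then have "seq_pow [a,a] 6 ! j = [a,a] ! (j mod 2)" by (simp add: seq_pow_nth numeral_2_eq_2)
  also have "\<dots> = a" by (cases "j mod 2 = 0") (auto simp: nth_Cons split: nat.split)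
  finally show "seq_pow [a,a] 6 ! j = [a] ! ((0+j) mod length [a])" by simp
qed

lemma pat_ab: "\<forall>j<length (seq_pow [a,b] 6). seq_pow [a,b] 6 ! j = [a,b] ! ((0+j) mod length [a,b])"
  by (simp add: seq_pow_nth numeral_2_eq_2)

lemma pat_ba: "\<forall>j<length (seq_pow [b,a] 6). seq_pow [b,a] 6 ! j = [a,b] ! ((1+j) mod length [a,b])"
proof (intro allI impI)
  fix j assume "j < length (seq_pow [b,a] 6)"
  then have "seq_pow [b,a] 6 ! j = [b,a] ! (j mod 2)" by (simp add: seq_pow_nth numeral_2_eq_2)
  also have "\<dots> = [a,b] ! ((1+j) mod 2)"
    by (cases "j mod 2 = 0") (auto simp: mod_Suc)
  finally show "seq_pow [b,a] 6 ! j = [a,b] ! ((1+j) mod length [a,b])" by (simp add: numeral_2_eq_2)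
qed


lemma sum_seq_pow: "sum_list (seq_pow u k) = k * sum_list u"
  by (induction k) (auto simp: seq_pow_Suc)

lemma admI:
  assumes "set xs \<subseteq> {3,4,5}" "\<And>a b. cnt xs [a,b] = cnt xs [b,a]"
  shows "admissible xs"
  using assms by (auto simp: admissible_def)

lemma part1:
  assumes "l \<ge> (3::nat)" shows "\<exists>xs. cyclic_partition xs l \<and> admissible xs"
proof -
  define y where "y = 3 + l mod 3"
  define x where "x = (l - y) div 3"
  have y: "y \<in> {3,4,5}" by (auto simp: y_def)
  have lx: "3 * x + y = l" using assms unfolding x_def y_def by presburger
  define xs where "xs = seq_pow [3] x @ [y]"
  have cp: "cyclic_partition xs l" using y lx set_seq_pow[of "[3]" x]
    by (auto simp: cyclic_partition_def xs_def sum_seq_pow)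
  have adm: "admissible xs"
  proof (rule admI)
    show "set xs \<subseteq> {3,4,5}" using y set_seq_pow[of "[3]" x] by (auto simp: xs_def)
    fix a b
    show "cnt xs [a,b] = cnt xs [b,a]"
    proof (cases "x = 0")
      case True
      then show ?thesis by (auto simp: xs_def cnt_pair)
    next
      case False
      then show ?thesis
        by (simp add: xs_def cnt_pair lp_append lp_seq_pow1)
    qed
  qed
  show ?thesis using cp adm by blast
qed


lemma symW: assumes pos: "p > 0" "q > 0" "u > 0" "s > 0"
  shows "lp ([3,4,5] @ seq_pow [3] p @ seq_pow [4,3] q @ seq_pow [5,3] q @ seq_pow [5] u
     @ seq_pow [4,5] q @ seq_pow [4] s) =
     {#(3,4),(4,5)#} + lp (seq_pow [3] p) + lp (seq_pow [4,3] q) + lp (seq_pow [5,3] q) + lp (seq_pow [5] u)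
     + lp (seq_pow [4,5] q) + lp (seq_pow [4] s) + {#(5,3),(3,4),(3,5),(3,5),(5,4),(5,4)#}"
  using pos by (simp add: lp_append lp_Cons)


lemma symW2: assumes pos: "p > 0" "q > 0" "u > 0" "s > 0"
  and W: "W = [3,4,5] @ seq_pow [3] p @ seq_pow [4,3] q @ seq_pow [5,3] q @ seq_pow [5] u
     @ seq_pow [4,5] q @ seq_pow [4] s"
  and ab: "a \<in> {3,4,5}" "b \<in> {3,4,5}"
  shows "cnt W [a,b] = cnt W [b,a]"
proof -
  have ne: "W \<noteq> []" "hd W = 3" "last W = 4" using pos W by auto
  have c: "cnt W [x,y] = count (lp W) (x,y) + (if 4 = x \<and> 3 = y then 1 else 0)" for x y
    using cnt_pair[OF ne(1), of x y] ne by simp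
  have L: "lp W = {#(3,4),(4,5)#} + replicate_mset (p-1) (3,3) + (replicate_mset q (4,3) + replicate_mset (q-1) (3,4))
     + (replicate_mset q (5,3) + replicate_mset (q-1) (3,5)) + replicate_mset (u-1) (5,5)
     + (replicate_mset q (4,5) + replicate_mset (q-1) (5,4)) + replicate_mset (s-1) (4,4)
     + {#(5,3),(3,4),(3,5),(3,5),(5,4),(5,4)#}"
    unfolding W symW[OF pos] lp_seq_pow1 lp_seq_pow2[OF pos(2)] ..
  show ?thesis unfolding c L using ab pos by (elim insertE; simp)
qed


lemma part2:
  assumes l: "l \<ge> (500::nat)"
  shows "\<exists>xs. cyclic_partition xs l \<and> admissible xs \<and>
            (\<forall>a\<in>{3,4,5::nat}. \<forall>b\<in>{3,4,5::nat}.
               real (cnt xs (seq_pow [a, b] 6)) \<ge> real l / 200)"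
proof -
  define c where "c = l div 200 + 1"
  define q where "q = c + 6"
  define u where "u = c + 11"
  define D where "D = l - 33 * c - 255"
  define e where "e = D mod 3"
  define s where "s = c + 11 + e"
  define p where "p = (D - 4 * e) div 3"
  have ldm: "l = 200 * (l div 200) + l mod 200" by simp
  have "l mod 200 < 200" by simp
  moreover have "200 * c = 200 * (l div 200) + 200" unfolding c_def by simp
  ultimately have lc: "l < 200 * c" using ldm by linarith
  have lc2: "200 * (c - 1) \<le> l" unfolding c_def by simp
  have D0: "33 * c + 263 \<le> l" using l lc2 by linarith
  have e2: "e \<le> 2" unfolding e_def by simp
  have Dd: "D = 3 * (D div 3) + e" unfolding e_def by simp
  have D8: "D \<ge> 8" unfolding D_def using D0 by linarith
  have "D - 4 * e = 3 * (D div 3 - e)" using Dd D8 e2 by linarith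
  then have pD: "p = D div 3 - e" unfolding p_def by simp
  have sum_eq: "3 * p + 33 * c + 255 + 4 * e = l" using pD Dd D8 e2 D0 unfolding D_def by linarith
  have pc: "p \<ge> c + 11" using sum_eq e2 l lc2 by linarith
  define W where "W = [3,4,5] @ seq_pow [3] p @ seq_pow [4,3] q @ seq_pow [5,3] q @ seq_pow [5] u
     @ seq_pow [4,5] q @ seq_pow [4] s"
  have pos: "p > 0" "q > 0" "u > 0" "s > 0" using pc by (auto simp: q_def u_def s_def)
  have setW: "set W \<subseteq> {3,4,5}"
    using set_seq_pow[of "[3]" p] set_seq_pow[of "[4,3]" q] set_seq_pow[of "[5,3]" q]
      set_seq_pow[of "[5]" u] set_seq_pow[of "[4,5]" q] set_seq_pow[of "[4]" s]
    by (auto simp: W_def)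
  have "sum_list W = 12 + 3 * p + 7 * q + 8 * q + 5 * u + 9 * q + 4 * s"
    by (simp add: W_def sum_seq_pow)
  then have sumW: "sum_list W = l" using sum_eq by (simp add: q_def u_def s_def)
  have cpW: "cyclic_partition W l" using sumW setW by (auto simp: cyclic_partition_def W_def)
  have admW: "admissible W"
    unfolding admissible_def
  proof (intro conjI ballI)
    fix x assume "x \<in> set W" then show "x \<in> {3,4,5}" using setW by auto
  next
    fix a b :: nat assume "a \<in> {3,4,5}" "b \<in> {3,4,5}"
    then show "cnt W [a,b] = cnt W [b,a]" by (rule symW2[OF pos W_def])
  qed
  have c33: "c \<le> cnt W (seq_pow [3,3] 6)"
    by (rule cnt_lb[where A="[3,4,5]" and u="[3]" and k=p and s=0], simp add: W_def,
        simp, rule pat_diag, simp add: seq_pow_def, use pc in auto)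
  have c44: "c \<le> cnt W (seq_pow [4,4] 6)"
    by (rule cnt_lb[where A="[3,4,5] @ seq_pow [3] p @ seq_pow [4,3] q @ seq_pow [5,3] q @ seq_pow [5] u
     @ seq_pow [4,5] q" and u="[4]" and k=s and s=0 and C="[]"], simp add: W_def,
        simp, rule pat_diag, simp add: seq_pow_def, auto simp: s_def)
  have c55: "c \<le> cnt W (seq_pow [5,5] 6)"
    by (rule cnt_lb[where A="[3,4,5] @ seq_pow [3] p @ seq_pow [4,3] q @ seq_pow [5,3] q" and u="[5]" and k=u and s=0],
        simp add: W_def, simp, rule pat_diag, simp add: seq_pow_def, auto simp: u_def)
  have c43: "c \<le> cnt W (seq_pow [4,3] 6)"
    by (rule cnt_lb[where A="[3,4,5] @ seq_pow [3] p" and u="[4,3]" and k=q and s=0],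
        simp add: W_def, simp, rule pat_ab, simp add: seq_pow_def, auto simp: q_def)
  have c34: "c \<le> cnt W (seq_pow [3,4] 6)"
    by (rule cnt_lb[where A="[3,4,5] @ seq_pow [3] p" and u="[4,3]" and k=q and s=1],
        simp add: W_def, simp, rule pat_ba, simp add: seq_pow_def, auto simp: q_def)
  have c53: "c \<le> cnt W (seq_pow [5,3] 6)"
    by (rule cnt_lb[where A="[3,4,5] @ seq_pow [3] p @ seq_pow [4,3] q" and u="[5,3]" and k=q and s=0],
        simp add: W_def, simp, rule pat_ab, simp add: seq_pow_def, auto simp: q_def)
  have c35: "c \<le> cnt W (seq_pow [3,5] 6)"
    by (rule cnt_lb[where A="[3,4,5] @ seq_pow [3] p @ seq_pow [4,3] q" and u="[5,3]" and k=q and s=1],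
        simp add: W_def, simp, rule pat_ba, simp add: seq_pow_def, auto simp: q_def)
  have c45: "c \<le> cnt W (seq_pow [4,5] 6)"
    by (rule cnt_lb[where A="[3,4,5] @ seq_pow [3] p @ seq_pow [4,3] q @ seq_pow [5,3] q @ seq_pow [5] u" and u="[4,5]" and k=q and s=0],
        simp add: W_def, simp, rule pat_ab, simp add: seq_pow_def, auto simp: q_def)
  have c54: "c \<le> cnt W (seq_pow [5,4] 6)"
    by (rule cnt_lb[where A="[3,4,5] @ seq_pow [3] p @ seq_pow [4,3] q @ seq_pow [5,3] q @ seq_pow [5] u" and u="[4,5]" and k=q and s=1],
        simp add: W_def, simp, rule pat_ba, simp add: seq_pow_def, auto simp: q_def)
  have rl: "real l / 200 \<le> real c" using lc by simp
  have "\<forall>a\<in>{3,4,5::nat}. \<forall>b\<in>{3,4,5::nat}. real (cnt W (seq_pow [a, b] 6)) \<ge> real l / 200"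
  proof (intro ballI)
    fix a b :: nat assume "a \<in> {3,4,5}" "b \<in> {3,4,5}"
    then have "c \<le> cnt W (seq_pow [a, b] 6)"
      using c33 c44 c55 c43 c34 c53 c35 c45 c54 by auto
    then show "real (cnt W (seq_pow [a, b] 6)) \<ge> real l / 200" using rl by linarith
  qed
  then show ?thesis using cpW admW by blast
qed


theorem proposition4p1:
  shows "(\<forall>l::nat. l \<ge> 3 \<longrightarrow> (\<exists>xs. cyclic_partition xs l \<and> admissible xs)) \<and>
         (\<forall>l::nat. l \<ge> 500 \<longrightarrow> (\<exists>xs. cyclic_partition xs l \<and> admissible xs \<and>
            (\<forall>a\<in>{3,4,5::nat}. \<forall>b\<in>{3,4,5::nat}.
               real (cnt xs (seq_pow [a, b] 6)) \<ge> real l / 200)))"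
  using part1 part2 by blast

end
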